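(* There is a constant $c$ such that for every $n\in\mathbb{N}_{\ge1}$ there exists a language $L_n$ recognized by a deterministic weak Muller automaton $\mathfrak{A}_n$ with Emerson–Lei acceptance condition, of size at most $c\cdot n$, such that Player $O$ wins $\Gamma_f(L_n)$ for some constant delay function $f$, but Player $I$ wins $\Gamma_g(L_n)$ for every delay function $g$ with $\sum_{i=0}^{n-1}g(i)\le 2^{2^n}$.
   Context: An $\omega$-automaton $\mathfrak{A}=(Q,\Sigma,q_I,\Delta,\mathrm{Acc})$ has finite state set $Q$, alphabet $\Sigma$, initial state $q_I$, transitions $\Delta\subseteq Q\times\Sigma\times Q$, accepting runs $\mathrm{Acc}\subseteq\Delta^\omega$; $L(\mathfrak{A})$ is the set of words processed by an initial accepting run. Deterministic means $\Delta$ is a total function $Q\times\Sigma\to Q$. A weak Muller automaton has $\mathcal{F}\subseteq 2^Q$ and accepts runs whose set of visited states lies in $\mathcal{F}$. Emerson–Lei representation: $\mathcal{F}$ is given by a Boolean formula $\varphi$ over variables $Q$, $\mathcal{F}$ being the sets $F\subseteq Q$ such that the assignment making exactly the elements of $F$ true satisfies $\varphi$; the size of the automaton is $|Q|+|\varphi|$ ($|\varphi|$ the length of $\varphi$). A delay function is $f:\mathbb{N}\to\mathbb{N}_{\ge1}$; it is constant if $f(i)=1$ for all $i>0$. In the delay game $\Gamma_f(L)$, $L\subseteq(\Sigma_I\times\Sigma_O)^\omega$, in round $i=0,1,\dots$ Player $I$ picks $u_i\in\Sigma_I^{f(i)}$ and then Player $O$ picks $v_i\in\Sigma_O$; $O$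 wins the play iff $\binom{u_0u_1\cdots}{v_0v_1\cdots}\in L$. Strategies: $\tau_I:\Sigma_O^*\to\Sigma_I^*$ with $|\tau_I(w)|=f(|w|)$, $\tau_O:\Sigma_I^+\to\Sigma_O$; a player wins the game if she/he has a strategy winning all consistent plays. *)

theory Defs
  imports Main
begin

datatype bformula = BTrue | BFalse | BVar nat | BNot bformula
  | BAnd bformula bformula | BOr bformula bformula

fun beval :: "(nat \<Rightarrow> bool) \<Rightarrow> bformula \<Rightarrow> bool" where
  "beval a BTrue = True"
| "beval a BFalse = False"
| "beval a (BVar q) = a q"
| "beval a (BNot p) = (\<not> beval a p)"
| "beval a (BAnd p r) = (beval a p \<and> beval a r)"
| "beval a (BOr p r) = (beval a p \<or> beval a r)"

fun blen :: "bformula \<Rightarrow> nat" where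
  "blen BTrue = 1"
| "blen BFalse = 1"
| "blen (BVar q) = 1"
| "blen (BNot p) = 1 + blen p"
| "blen (BAnd p r) = 1 + blen p + blen r"
| "blen (BOr p r) = 1 + blen p + blen r"

fun bvars :: "bformula \<Rightarrow> nat set" where
  "bvars BTrue = {}"
| "bvars BFalse = {}"
| "bvars (BVar q) = {q}"
| "bvars (BNot p) = bvars p"
| "bvars (BAnd p r) = bvars p \<union> bvars r"
| "bvars (BOr p r) = bvars p \<union> bvars r"

record dwm_aut =
  in_alph :: "nat set"
  out_alph :: "nat set"
  states :: "nat set"
  init :: nat
  delta :: "nat \<Rightarrow> nat \<times> nat \<Rightarrow> nat"
  acc :: bformula

definition wf_dwm :: "dwm_aut \<Rightarrow> bool" where
  "wf_dwm A \<longleftrightarrow> finite (in_alph A) \<and> in_alph A \<noteq> {} \<and>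
     finite (out_alph A) \<and> out_alph A \<noteq> {} \<and>
     finite (states A) \<and> init A \<in> states A \<and>
     (\<forall>q \<in> states A. \<forall>a \<in> in_alph A \<times> out_alph A. delta A q a \<in> states A) \<and>
     bvars (acc A) \<subseteq> states A"

definition aut_size :: "dwm_aut \<Rightarrow> nat" where
  "aut_size A = card (states A) + blen (acc A)"

primrec run :: "dwm_aut \<Rightarrow> (nat \<Rightarrow> nat \<times> nat) \<Rightarrow> nat \<Rightarrow> nat" where
  "run A w 0 = init A"
| "run A w (Suc i) = delta A (run A w i) (w i)"

text \<open>Weak Muller acceptance: the set of visited states satisfies the formula.\<close>
definition lang :: "dwm_aut \<Rightarrow> (nat \<Rightarrow> nat \<times> nat) set" where
  "lang A = {w. (\<forall>i. w i \<in> in_alph A \<times> out_alph A) \<and>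
                 beval (\<lambda>q. q \<in> range (run A w)) (acc A)}"

definition delay_fun :: "(nat \<Rightarrow> nat) \<Rightarrow> bool" where
  "delay_fun f \<longleftrightarrow> (\<forall>i. f i \<ge> 1)"

definition const_delay :: "(nat \<Rightarrow> nat) \<Rightarrow> bool" where
  "const_delay f \<longleftrightarrow> delay_fun f \<and> (\<forall>i>0. f i = 1)"

text \<open>Input word obtained by concatenating the blocks \<open>u 0, u 1, ...\<close>
  (each block nonempty, so position k lies within the first k+1 blocks).\<close>
definition in_word :: "(nat \<Rightarrow> nat list) \<Rightarrow> nat \<Rightarrow> nat" where
  "in_word u k = concat (map u [0..<Suc k]) ! k"

definition play_word :: "(nat \<Rightarrow> nat list) \<Rightarrow> (nat \<Rightarrow> nat) \<Rightarrow> nat \<Rightarrow> nat \<times> nat" where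
  "play_word u v k = (in_word u k, v k)"

definition O_wins :: "(nat \<Rightarrow> nat) \<Rightarrow> nat set \<Rightarrow> nat set \<Rightarrow> (nat \<Rightarrow> nat \<times> nat) set \<Rightarrow> bool" where
  "O_wins f SI SO L \<longleftrightarrow> (\<exists>tO :: nat list \<Rightarrow> nat. (\<forall>w. tO w \<in> SO) \<and>
     (\<forall>u v. (\<forall>i. length (u i) = f i \<and> set (u i) \<subseteq> SI) \<longrightarrow>
            (\<forall>i. v i = tO (concat (map u [0..<Suc i]))) \<longrightarrow>
            play_word u v \<in> L))"

definition I_wins :: "(nat \<Rightarrow> nat) \<Rightarrow> nat set \<Rightarrow> nat set \<Rightarrow> (nat \<Rightarrow> nat \<times> nat) set \<Rightarrow> bool" where
  "I_wins f SI SO L \<longleftrightarrow> (\<exists>tI :: nat list \<Rightarrow> nat list.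
     (\<forall>w. length (tI w) = f (length w) \<and> set (tI w) \<subseteq> SI) \<and>
     (\<forall>u v. (\<forall>i. v i \<in> SO) \<longrightarrow>
            (\<forall>i. u i = tI (map v [0..<i])) \<longrightarrow>
            play_word u v \<notin> L))"

end

theory Submission
  imports Defs "HOL-Library.Countable"
begin

definition bad :: "nat list \<Rightarrow> bool" where
  "bad xs \<longleftrightarrow> (\<exists>p q. p < q \<and> q < length xs \<and> xs!p = xs!q \<and> (\<forall>k. p<k \<and> k<q \<longrightarrow> xs!k < xs!p))"

lemma bad_app1: "bad xs \<Longrightarrow> bad (xs @ ys)"
proof -
  assume "bad xs"
  then obtain p q where a: "p < q" "q < length xs" "xs!p = xs!q" "\<forall>k. p<k \<and> k<q \<longrightarrow> xs!k < xs!p"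
    unfolding bad_def by blast
  have "\<forall>k. p<k \<and> k<q \<longrightarrow> (xs@ys)!k < (xs@ys)!p" using a by (auto simp: nth_append)
  then show "bad (xs @ ys)" unfolding bad_def using a
    by (intro exI[of _ p] exI[of _ q]) (auto simp: nth_append)
qed

lemma bad_app2: "bad ys \<Longrightarrow> bad (xs @ ys)"
  unfolding bad_def
proof (elim exE conjE)
  fix p q assume a: "p < q" "q < length ys" "ys!p = ys!q" "\<forall>k. p<k \<and> k<q \<longrightarrow> ys!k < ys!p"
  show "\<exists>p q. p < q \<and> q < length (xs @ ys) \<and> (xs @ ys)!p = (xs @ ys)!q \<and> (\<forall>k. p<k \<and> k<q \<longrightarrow> (xs @ ys)!k < (xs @ ys)!p)"
  proof (intro exI conjI allI impI)
    show "length xs + p < length xs + q" using a by simp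
    show "length xs + q < length (xs @ ys)" using a by simp
    show "(xs @ ys) ! (length xs + p) = (xs @ ys) ! (length xs + q)" using a by (simp add: nth_append)
    fix k assume k: "length xs + p < k \<and> k < length xs + q"
    then have "p < k - length xs \<and> k - length xs < q" by auto
    then show "(xs @ ys) ! k < (xs @ ys) ! (length xs + p)" using a(4)[rule_format, of "k - length xs"] k
      by (auto simp: nth_append)
  qed
qed

lemma exists_bad: "set xs \<subseteq> {..<m} \<Longrightarrow> 2^m \<le> length xs \<Longrightarrow> bad xs"
proof (induction m arbitrary: xs)
  case 0
  then show ?case by auto
next
  case (Suc m)
  show ?case
  proof (cases "m \<in> set xs")
    case False
    then have "set xs \<subseteq> {..<m}" using Suc.prems(1) by (auto simp: less_Suc_eq)
    moreover have "2^m \<le> length xs" using Suc.prems(2) by (simp add: order_trans)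
    ultimately show ?thesis using Suc.IH by blast
  next
    case True
    then obtain ys zs where xs: "xs = ys @ m # zs" and ny: "m \<notin> set ys"
      by (metis split_list_first)
    show ?thesis
    proof (cases "m \<in> set zs")
      case True
      then obtain zs1 zs2 where zs: "zs = zs1 @ m # zs2" and nz: "m \<notin> set zs1"
        by (metis split_list_first)
      have lt: "\<forall>x\<in>set zs1. x < m" using Suc.prems(1) nz xs zs by (auto simp: less_Suc_eq)
      have "bad (m # zs1 @ [m])"
        unfolding bad_def
      proof (intro exI conjI allI impI)
        show "0 < Suc (length zs1)" by simp
        show "Suc (length zs1) < length (m # zs1 @ [m])" by simp
        show "(m # zs1 @ [m]) ! 0 = (m # zs1 @ [m]) ! Suc (length zs1)" by simp
        fix k assume "0 < k \<and> k < Suc (length zs1)"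
        then show "(m # zs1 @ [m]) ! k < (m # zs1 @ [m]) ! 0"
          using lt by (cases k) (auto simp: nth_append)
      qed
      then have "bad ((m # zs1 @ [m]) @ zs2)" by (rule bad_app1)
      then have "bad (ys @ ((m # zs1 @ [m]) @ zs2))" by (rule bad_app2)
      then show ?thesis using xs zs by simp
    next
      case False
      have sy: "set ys \<subseteq> {..<m}" and sz: "set zs \<subseteq> {..<m}"
        using Suc.prems(1) ny False xs by (auto simp: less_Suc_eq)
      have "2^m \<le> length ys \<or> 2^m \<le> length zs" using Suc.prems(2) xs by auto
      then show ?thesis
      proof
        assume "2^m \<le> length ys"
        then have "bad ys" using Suc.IH sy by blast
        then show ?thesis using xs bad_app1 by simp
      next
        assume "2^m \<le> length zs"
        then have "bad zs" using Suc.IH sz by blast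
        then have "bad ((ys @ [m]) @ zs)" by (rule bad_app2)
        then show ?thesis using xs by simp
      qed
    qed
  qed
qed

fun W :: "nat \<Rightarrow> nat list" where
  "W 0 = []"
| "W (Suc m) = W m @ m # W m"

lemma W_len: "length (W m) = 2^m - 1"
  by (induction m) auto

lemma W_set: "set (W m) \<subseteq> {..<m}"
  by (induction m) auto

lemma bad_mid:
  assumes "\<forall>x\<in>set xs. x < c" "\<forall>x\<in>set ys. x < c" "\<not> bad xs" "\<not> bad ys"
  shows "\<not> bad (xs @ c # ys)"
proof
  assume "bad (xs @ c # ys)"
  then obtain p q where pq: "p < q" "q < length (xs @ c # ys)" "(xs @ c # ys)!p = (xs @ c # ys)!q"
    "\<forall>k. p<k \<and> k<q \<longrightarrow> (xs @ c # ys)!k < (xs @ c # ys)!p"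
    unfolding bad_def by blast
  let ?l = "length xs"
  have v1: "i < ?l \<Longrightarrow> (xs @ c # ys)!i < c" for i using assms(1) by (simp add: nth_append)
  have v2: "i > ?l \<Longrightarrow> i < length (xs @ c # ys) \<Longrightarrow> (xs @ c # ys)!i < c" for i
    using assms(2) by (simp add: nth_append)
  have v0: "(xs @ c # ys)!?l = c" by simp
  consider "q < ?l" | "q = ?l" | "p < ?l \<and> ?l < q" | "p = ?l" | "p > ?l" by linarith
  then show False
  proof cases
    case 1
    then have "bad xs" unfolding bad_def using pq
      by (intro exI[of _ p] exI[of _ q]) (auto simp: nth_append)
    then show False using assms by simp
  next
    case 2 then show False using v1[of p] v0 pq(1,3) by simp
  next
    case 3 then show False using pq(4)[rule_format, of ?l] v1[of p] v0 by simp
  next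
    case 4 then show False using v2[of q] v0 pq(1,2,3) by simp
  next
    case 5
    have e: "i > ?l \<Longrightarrow> (xs @ c # ys)!i = ys ! (i - Suc ?l)" for i
      by (simp add: nth_append)
    have a1: "p - Suc ?l < q - Suc ?l" using 5 pq by auto
    have a2: "q - Suc ?l < length ys" using 5 pq by auto
    have a3: "ys ! (p - Suc ?l) = ys ! (q - Suc ?l)" using e[of p] e[of q] pq 5 by auto
    have a4: "\<forall>k. p - Suc ?l < k \<and> k < q - Suc ?l \<longrightarrow> ys ! k < ys ! (p - Suc ?l)"
    proof (intro allI impI)
      fix k assume k: "p - Suc ?l < k \<and> k < q - Suc ?l"
      then have "p < k + Suc ?l \<and> k + Suc ?l < q" by auto
      then show "ys ! k < ys ! (p - Suc ?l)" using pq(4)[rule_format, of "k + Suc ?l"] e[of p] e[of "k + Suc ?l"] 5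
        by auto
    qed
    have "bad ys" unfolding bad_def
      by (intro exI[of _ "p - Suc ?l"] exI[of _ "q - Suc ?l"] conjI) (rule a1, rule a2, rule a3, rule a4)
    then show False using assms by simp
  qed
qed

lemma W_free: "\<not> bad (W m)"
proof (induction m)
  case 0 then show ?case by (simp add: bad_def)
next
  case (Suc m)
  have "\<forall>x\<in>set (W m). x < m" using W_set by auto
  then show ?case using bad_mid Suc by simp
qed

fun val :: "bool list \<Rightarrow> nat" where
  "val [] = 0"
| "val (b # bs) = (if b then 2 ^ length bs else 0) + val bs"

fun enc :: "nat \<Rightarrow> nat \<Rightarrow> bool list" where
  "enc 0 x = []"
| "enc (Suc n) x = (2^n \<le> x) # enc n (x mod 2^n)"

lemma val_lt: "val bs < 2 ^ length bs"
  by (induction bs) auto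

lemma enc_len[simp]: "length (enc n x) = n"
  by (induction n arbitrary: x) auto

lemma val_enc: "x < 2^n \<Longrightarrow> val (enc n x) = x"
proof (induction n arbitrary: x)
  case 0 then show ?case by simp
next
  case (Suc n)
  show ?case
  proof (cases "2^n \<le> x")
    case True
    then have "x mod 2^n = x - 2^n" using Suc.prems by (simp add: le_mod_geq)
    then show ?thesis using Suc True by simp
  next
    case False then show ?thesis using Suc by simp
  qed
qed

lemma val_inj: "length xs = length ys \<Longrightarrow> val xs = val ys \<Longrightarrow> xs = ys"
proof (induction xs arbitrary: ys)
  case Nil then show ?case by simp
next
  case (Cons x xs)
  then obtain y ys' where ys: "ys = y # ys'" by (cases ys) auto
  have l: "length xs = length ys'" using Cons ys by simp
  have "x = y" using Cons.prems ys l val_lt[of xs] val_lt[of ys']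
    by (cases x; cases y) auto
  then show ?case using Cons ys l by auto
qed

definition lexw :: "bool list \<Rightarrow> bool list \<Rightarrow> nat \<Rightarrow> bool" where
  "lexw xs ys d \<longleftrightarrow> d < length xs \<and> take d xs = take d ys \<and> \<not> xs!d \<and> ys!d"

lemma lex_val: "length xs = length ys \<Longrightarrow> lexw xs ys d \<Longrightarrow> val xs < val ys"
proof (induction xs arbitrary: ys d)
  case Nil then show ?case by (simp add: lexw_def)
next
  case (Cons x xs)
  then obtain y ys' where ys: "ys = y # ys'" by (cases ys) auto
  have l: "length xs = length ys'" using Cons ys by simp
  show ?case
  proof (cases d)
    case 0
    then show ?thesis using Cons.prems ys l val_lt[of xs] by (auto simp: lexw_def)
  next
    case (Suc d')
    then have "x = y" "lexw xs ys' d'" using Cons.prems ys by (auto simp: lexw_def)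
    then show ?thesis using Cons.IH l ys by auto
  qed
qed

lemma val_lex: "length xs = length ys \<Longrightarrow> val xs < val ys \<Longrightarrow> \<exists>d. lexw xs ys d"
proof (induction xs arbitrary: ys)
  case Nil then show ?case by simp
next
  case (Cons x xs)
  then obtain y ys' where ys: "ys = y # ys'" by (cases ys) auto
  have l: "length xs = length ys'" using Cons ys by simp
  show ?case
  proof (cases "x = y")
    case True
    then have "val xs < val ys'" using Cons.prems ys by auto
    then obtain d where "lexw xs ys' d" using Cons.IH l by blast
    then have "lexw (x # xs) ys (Suc d)" using True ys by (simp add: lexw_def)
    then show ?thesis by blast
  next
    case False
    then have "\<not> x \<and> y" using Cons.prems ys l val_lt[of xs] val_lt[of ys']
      by (cases x; cases y) auto
    then have "lexw (x # xs) ys 0" using ys by (simp add: lexw_def)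
    then show ?thesis by blast
  qed
qed

datatype st = Init | Com nat bool | Bs nat | Ps nat bool | Ma nat bool | Mm nat | Mb nat | Qs nat bool | Acc | Rej

instance st :: countable by countable_datatype

definition newB :: "nat \<Rightarrow> nat \<Rightarrow> st" where
  "newB a c = (if c = 1 then Ps 0 (a = 1) else Bs 0)"
definition newM :: "nat \<Rightarrow> nat \<Rightarrow> st" where
  "newM a c = (if c = 2 then Qs 0 (a = 1) else if c = 1 then (if a = 1 then Rej else Mm 0) else Ma 0 (a = 1))"

fun step :: "nat \<Rightarrow> st \<Rightarrow> nat \<times> nat \<Rightarrow> st" where
  "step n Init (a,c) = Com 0 (c = 1)"
| "step n (Com i b) (a,c) = (if Suc i < n then Com (Suc i) (c = 1) else newB a c)"
| "step n (Bs i) (a,c) = (if Suc i < n then Bs (Suc i) else newB a c)"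
| "step n (Ps i b) (a,c) = (if Suc i < n then Ps (Suc i) (a = 1) else newM a c)"
| "step n (Ma i b) (a,c) = (if Suc i < n then (if c = 1 then (if a = 1 then Rej else Mm (Suc i)) else Ma (Suc i) (a = 1)) else Rej)"
| "step n (Mm i) (a,c) = (if Suc i < n then Mb (Suc i) else newM a c)"
| "step n (Mb i) (a,c) = (if Suc i < n then Mb (Suc i) else newM a c)"
| "step n (Qs i b) (a,c) = (if Suc i < n then Qs (Suc i) (a = 1) else Acc)"
| "step n Acc x = Acc"
| "step n Rej x = Rej"

primrec srun :: "nat \<Rightarrow> (nat \<Rightarrow> nat \<times> nat) \<Rightarrow> nat \<Rightarrow> st" where
  "srun n w 0 = Init"
| "srun n w (Suc t) = step n (srun n w t) (w t)"

definition Sts :: "nat \<Rightarrow> st set" where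
  "Sts n = set ([Init, Acc, Rej] @ concat (map (\<lambda>i. [Com i True, Com i False, Bs i, Ps i True, Ps i False,
      Ma i True, Ma i False, Mm i, Mb i, Qs i True, Qs i False]) [0..<n]))"

definition V :: "st \<Rightarrow> bformula" where "V s = BVar (to_nat s)"
definition imp :: "bformula \<Rightarrow> bformula \<Rightarrow> bformula" where "imp p q = BOr (BNot p) q"

fun conj :: "bformula list \<Rightarrow> bformula" where
  "conj [] = BTrue"
| "conj (x # xs) = BAnd x (conj xs)"

definition cl :: "nat \<Rightarrow> bformula list" where
  "cl i = [imp (V (Ps i True)) (V (Com i True)), imp (V (Ps i False)) (V (Com i False)),
           imp (V (Qs i True)) (V (Com i True)), imp (V (Qs i False)) (V (Com i False)),
           imp (V (Ma i True)) (V (Com i True)), imp (V (Ma i False)) (V (Com i False)),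
           imp (V (Mm i)) (V (Com i True))]"

definition phi :: "nat \<Rightarrow> bformula" where
  "phi n = BAnd (V Acc) (conj (concat (map cl [0..<n])))"

definition Aut :: "nat \<Rightarrow> dwm_aut" where
  "Aut n = \<lparr>in_alph = {0,1}, out_alph = {0,1,2}, states = to_nat ` Sts n, init = to_nat Init,
     delta = (\<lambda>q x. to_nat (step n (from_nat q) x)), acc = phi n\<rparr>"

lemma run_eq: "run (Aut n) w t = to_nat (srun n w t)"
  by (induction t) (simp_all add: Aut_def)

lemma beval_conj: "beval a (conj xs) \<longleftrightarrow> (\<forall>x\<in>set xs. beval a x)"
  by (induction xs) auto

definition good :: "nat \<Rightarrow> (nat \<Rightarrow> nat \<times> nat) \<Rightarrow> bool" where
  "good n w \<longleftrightarrow> Acc \<in> range (srun n w) \<and> (\<forall>i<n. \<forall>b.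
      (Ps i b \<in> range (srun n w) \<longrightarrow> Com i b \<in> range (srun n w)) \<and>
      (Qs i b \<in> range (srun n w) \<longrightarrow> Com i b \<in> range (srun n w)) \<and>
      (Ma i b \<in> range (srun n w) \<longrightarrow> Com i b \<in> range (srun n w)) \<and>
      (Mm i \<in> range (srun n w) \<longrightarrow> Com i True \<in> range (srun n w)))"

lemma vis_V: "beval (\<lambda>q. q \<in> range (run (Aut n) w)) (V s) \<longleftrightarrow> s \<in> range (srun n w)"
proof -
  have "range (run (Aut n) w) = to_nat ` range (srun n w)"
    using run_eq[of n w] by (auto simp: image_iff)
  then show ?thesis by (auto simp: V_def)
qed

lemma Aut_simps[simp]: "in_alph (Aut n) = {0,1}" "out_alph (Aut n) = {0,1,2}" "acc (Aut n) = phi n"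
  "states (Aut n) = to_nat ` Sts n" "init (Aut n) = to_nat Init"
  by (simp_all add: Aut_def)

lemma beval_phi: "beval (\<lambda>q. q \<in> range (run (Aut n) w)) (phi n) \<longleftrightarrow> good n w"
  unfolding phi_def good_def
  by (simp add: beval_conj cl_def imp_def vis_V all_bool_eq atLeast0LessThan) blast

lemma lang_Aut: "w \<in> lang (Aut n) \<longleftrightarrow> (\<forall>i. w i \<in> {0,1} \<times> {0,1,2}) \<and> good n w"
  unfolding lang_def using beval_phi by simp

lemma Sts_mem: "s \<in> Sts n \<longleftrightarrow> s \<in> {Init, Acc, Rej} \<or> (\<exists>i<n. \<exists>b. s = Com i b \<or> s = Bs i \<or> s = Ps i b \<or> s = Ma i b \<or>
    s = Mm i \<or> s = Mb i \<or> s = Qs i b)"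
  unfolding Sts_def by (auto simp: all_bool_eq ex_bool_eq)

lemma card_Sts: "card (Sts n) \<le> 3 + 11 * n"
proof -
  have "card (Sts n) \<le> length ([Init, Acc, Rej] @ concat (map (\<lambda>i. [Com i True, Com i False, Bs i, Ps i True, Ps i False,
      Ma i True, Ma i False, Mm i, Mb i, Qs i True, Qs i False]) [0..<n]))"
    unfolding Sts_def by (rule card_length)
  also have "\<dots> = 3 + 11 * n" by (induction n) (simp_all add: length_concat)
  finally show ?thesis .
qed

lemma step_Sts: "n \<ge> 1 \<Longrightarrow> s \<in> Sts n \<Longrightarrow> step n s x \<in> Sts n"
  by (cases x; cases s) (auto simp: Sts_mem newB_def newM_def)

lemma blen_conj: "blen (conj xs) = 1 + sum_list (map (\<lambda>x. 1 + blen x) xs)"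
  by (induction xs) auto

lemma bvars_conj: "bvars (conj xs) = (\<Union>x\<in>set xs. bvars x)"
  by (induction xs) auto

lemma blen_phi: "blen (phi n) = 3 + 35 * n"
proof -
  have "sum_list (map (\<lambda>x. 1 + blen x) (concat (map cl [0..<n]))) = 35 * n"
    by (induction n) (simp_all add: cl_def imp_def V_def)
  then show ?thesis by (simp add: phi_def blen_conj V_def)
qed

lemma fin_Sts: "finite (Sts n)" by (simp add: Sts_def)

lemma bvars_phi: "bvars (phi n) \<subseteq> to_nat ` Sts n"
proof -
  have "bvars (phi n) = to_nat ` ({Acc} \<union> (\<Union>i\<in>{..<n}. {Ps i True, Com i True, Ps i False, Com i False,
     Qs i True, Qs i False, Ma i True, Ma i False, Mm i}))"
    by (auto simp: phi_def bvars_conj cl_def imp_def V_def)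
  also have "\<dots> \<subseteq> to_nat ` Sts n" by (rule image_mono) (auto simp: Sts_mem)
  finally show ?thesis .
qed

lemma wf_Aut: "n \<ge> 1 \<Longrightarrow> wf_dwm (Aut n)"
proof -
  assume n: "n \<ge> 1"
  have "\<forall>q \<in> to_nat ` Sts n. \<forall>a. to_nat (step n (from_nat q) a) \<in> to_nat ` Sts n"
    using step_Sts[OF n] by auto
  moreover have "Init \<in> Sts n" by (simp add: Sts_mem)
  ultimately show ?thesis unfolding wf_dwm_def using fin_Sts bvars_phi
    by (simp add: Aut_def)
qed

lemma size_Aut: "n \<ge> 1 \<Longrightarrow> aut_size (Aut n) \<le> 52 * n"
proof -
  assume "n \<ge> 1"
  have "card (to_nat ` Sts n) \<le> card (Sts n)" by (rule card_image_le) (simp add: Sts_def)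
  then show ?thesis using card_Sts[of n] blen_phi[of n] \<open>n \<ge> 1\<close> by (simp add: aut_size_def)
qed

definition S :: "nat \<Rightarrow> (nat \<Rightarrow> nat \<times> nat) \<Rightarrow> nat \<Rightarrow> nat \<Rightarrow> st" where
  "S n w k r = srun n w (Suc (n*k + r))"
definition bk :: "nat \<Rightarrow> (nat \<Rightarrow> nat \<times> nat) \<Rightarrow> nat \<Rightarrow> nat \<Rightarrow> bool" where
  "bk n w k i = (fst (w (n*k + i)) = 1)"

definition Pblk where "Pblk n w k = (\<forall>i<n. S n w k i = Ps i (bk n w k i))"
definition Qblk where "Qblk n w k = (\<forall>i<n. S n w k i = Qs i (bk n w k i))"
definition Mblk where "Mblk n w k = (\<exists>d<n. (\<forall>i<d. S n w k i = Ma i (bk n w k i)) \<and> S n w k d = Mm d \<and> \<not> bk n w k d)"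
definition Mpart where "Mpart n w k r = (\<exists>d\<le>r. (\<forall>i<d. S n w k i = Ma i (bk n w k i)) \<and> S n w k d = Mm d \<and> \<not> bk n w k d)"
definition hist where "hist n w k = (\<exists>p<k. Pblk n w p \<and> (\<forall>k'. p<k' \<and> k'<k \<longrightarrow> Mblk n w k'))"
definition witness where "witness n w = (\<exists>p q. p<q \<and> Pblk n w p \<and> Qblk n w q \<and> (\<forall>k'. p<k' \<and> k'<q \<longrightarrow> Mblk n w k'))"

definition Inv where "Inv n w k r = (case S n w k r of
   Init \<Rightarrow> False
 | Com i b \<Rightarrow> k = 0 \<and> i = r
 | Bs i \<Rightarrow> i = r
 | Ps i b \<Rightarrow> i = r \<and> (\<forall>i'\<le>r. S n w k i' = Ps i' (bk n w k i'))
 | Ma i b \<Rightarrow> i = r \<and> hist n w k \<and> (\<forall>i'\<le>r. S n w k i' = Ma i' (bk n w k i'))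
 | Mm i \<Rightarrow> i = r \<and> hist n w k \<and> Mpart n w k r
 | Mb i \<Rightarrow> i = r \<and> hist n w k \<and> Mpart n w k r
 | Qs i b \<Rightarrow> i = r \<and> hist n w k \<and> (\<forall>i'\<le>r. S n w k i' = Qs i' (bk n w k i'))
 | Acc \<Rightarrow> witness n w
 | Rej \<Rightarrow> True)"

lemma kr_induct:
  assumes "n \<ge> (1::nat)" "P 0 0" "\<And>k r. Suc r < n \<Longrightarrow> P k r \<Longrightarrow> P k (Suc r)"
    "\<And>k. P k (n-1) \<Longrightarrow> P (Suc k) 0"
  shows "r < n \<Longrightarrow> P k r"
proof (induction k arbitrary: r)
  case 0
  then show ?case
  proof (induction r)
    case 0 then show ?case using assms(2) by simp
  next
    case (Suc r) then show ?case using assms(3) by simp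
  qed
next
  case (Suc k)
  have "P k (n-1)" using Suc.IH assms(1) by simp
  then have "P (Suc k) 0" by (rule assms(4))
  then show ?case using Suc.prems
  proof (induction r)
    case 0 then show ?case by simp
  next
    case (Suc r) then show ?case using assms(3) by simp
  qed
qed

lemma S_Suc: "S n w k (Suc r) = step n (S n w k r) (w (n*k + Suc r))"
  by (simp add: S_def)

lemma S_new: "n \<ge> 1 \<Longrightarrow> S n w (Suc k) 0 = step n (S n w k (n-1)) (w (n * Suc k))"
proof -
  assume "n \<ge> 1"
  then have "Suc (n*k + (n-1)) = n * Suc k" by simp
  then show ?thesis by (simp add: S_def del: mult_Suc_right)
qed

lemma Inv_0: "n \<ge> 1 \<Longrightarrow> Inv n w 0 0"
  by (cases "w 0") (simp add: Inv_def S_def)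

lemma Inv_same:
  assumes n: "n \<ge> 1" and r: "Suc r < n" and I: "Inv n w k r"
  shows "Inv n w k (Suc r)"
proof -
  obtain a c where wa: "w (n*k + Suc r) = (a,c)" by fastforce
  have St: "S n w k (Suc r) = step n (S n w k r) (a,c)" using wa S_Suc by simp
  have bk: "bk n w k (Suc r) = (a = 1)" using wa by (simp add: bk_def)
  show ?thesis
  proof (cases "S n w k r")
    case (Ma i b)
    show ?thesis
    proof (cases "c = 1 \<and> a \<noteq> 1")
      case True
      then have "Mpart n w k (Suc r)" using I Ma St bk unfolding Mpart_def Inv_def
        by (intro exI[of _ "Suc r"]) (auto simp: less_Suc_eq_le r)
      then show ?thesis using I Ma St True r unfolding Inv_def by auto
    next
      case False
      then show ?thesis using I Ma St bk r unfolding Inv_def by (auto simp: le_Suc_eq)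
    qed
  next
    case (Mm i)
    then show ?thesis using I St r unfolding Inv_def Mpart_def by (auto simp: le_Suc_eq)
  next
    case (Mb i)
    then show ?thesis using I St r unfolding Inv_def Mpart_def by (auto simp: le_Suc_eq)
  qed (use I St bk r in \<open>auto simp: Inv_def le_Suc_eq\<close>)
qed

lemma hist_P: "Pblk n w k \<Longrightarrow> hist n w (Suc k)"
  unfolding hist_def by auto

lemma hist_M: "hist n w k \<Longrightarrow> Mblk n w k \<Longrightarrow> hist n w (Suc k)"
  unfolding hist_def by (auto simp: less_Suc_eq)

lemma hist_Q: "hist n w k \<Longrightarrow> Qblk n w k \<Longrightarrow> witness n w"
  unfolding hist_def witness_def by auto

lemma le_pred: "n \<ge> 1 \<Longrightarrow> (\<forall>i'\<le>n-1. P i') \<Longrightarrow> (\<forall>i<(n::nat). P i)"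
  by auto

lemma Inv_new:
  assumes n: "n \<ge> 1" and I: "Inv n w k (n-1)"
  shows "Inv n w (Suc k) 0"
proof -
  obtain a c where wa: "w (n * Suc k) = (a,c)" by fastforce
  have St: "S n w (Suc k) 0 = step n (S n w k (n-1)) (a,c)" using wa S_new[OF n] by simp
  have bk: "bk n w (Suc k) 0 = (a = 1)" using wa by (simp add: bk_def)
  have nn: "\<not> Suc (n-1) < n" using n by simp
  show ?thesis
  proof (cases "S n w k (n-1)")
    case (Ps i b)
    then have "Pblk n w k" using I n unfolding Inv_def Pblk_def by auto
    have ii: "i = n - 1" using I Ps unfolding Inv_def by auto
    from \<open>Pblk n w k\<close> have h: "hist n w (Suc k)" by (rule hist_P)
    have "Mpart n w (Suc k) 0" if "S n w (Suc k) 0 = Mm 0" "a \<noteq> 1"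
      using that bk unfolding Mpart_def by auto
    then show ?thesis using h Ps St nn bk ii unfolding Inv_def by (auto simp: newM_def)
  next
    case (Mm i)
    have ii: "i = n - 1" using I Mm unfolding Inv_def by auto
    from Mm have "hist n w k" "Mpart n w k (n-1)" using I unfolding Inv_def by auto
    then have "hist n w k" "Mblk n w k" unfolding Mblk_def Mpart_def using n
      by (auto, metis Suc_pred' le_imp_less_Suc less_one not_less)
    then have h: "hist n w (Suc k)" by (rule hist_M)
    have "Mpart n w (Suc k) 0" if "S n w (Suc k) 0 = Mm 0" "a \<noteq> 1"
      using that bk unfolding Mpart_def by auto
    then show ?thesis using h Mm St nn bk ii unfolding Inv_def by (auto simp: newM_def)
  next
    case (Mb i)
    have ii: "i = n - 1" using I Mb unfolding Inv_def by auto
    from Mb have "hist n w k" "Mpart n w k (n-1)" using I unfolding Inv_def by auto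
    then have "hist n w k" "Mblk n w k" unfolding Mblk_def Mpart_def using n
      by (auto, metis Suc_pred' le_imp_less_Suc less_one not_less)
    then have h: "hist n w (Suc k)" by (rule hist_M)
    have "Mpart n w (Suc k) 0" if "S n w (Suc k) 0 = Mm 0" "a \<noteq> 1"
      using that bk unfolding Mpart_def by auto
    then show ?thesis using h Mb St nn bk ii unfolding Inv_def by (auto simp: newM_def)
  next
    case (Qs i b)
    have ii: "i = n - 1" using I Qs unfolding Inv_def by auto
    from Qs have "hist n w k" "Qblk n w k" using I n unfolding Inv_def Qblk_def by auto
    then have "witness n w" by (rule hist_Q)
    then show ?thesis using Qs St nn ii unfolding Inv_def by auto
  qed (use I St bk nn in \<open>auto simp: Inv_def newB_def\<close>)
qed

lemma Inv_all: "n \<ge> 1 \<Longrightarrow> r < n \<Longrightarrow> Inv n w k r"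
  by (rule kr_induct[where P="Inv n w"]) (auto intro: Inv_0 Inv_same Inv_new)

lemma srun_S: "n \<ge> 1 \<Longrightarrow> srun n w (Suc t) = S n w (t div n) (t mod n)"
  by (simp add: S_def)

lemma Acc_witness: "n \<ge> 1 \<Longrightarrow> Acc \<in> range (srun n w) \<Longrightarrow> witness n w"
proof -
  assume n: "n \<ge> 1" and "Acc \<in> range (srun n w)"
  then obtain T where T: "srun n w T = Acc" by (metis rangeE)
  then obtain t where t: "T = Suc t" by (cases T) auto
  have "Inv n w (t div n) (t mod n)" using Inv_all n by simp
  then show ?thesis using T t srun_S[OF n] unfolding Inv_def by simp
qed

lemma S_Com: "n \<ge> 1 \<Longrightarrow> r < n \<Longrightarrow> S n w 0 r = Com r (snd (w r) = 1)"
proof (induction r)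
  case 0 then show ?case by (cases "w 0") (simp add: S_def)
next
  case (Suc r)
  then show ?case using S_Suc[of n w 0 r] by (cases "w (Suc r)") simp
qed

lemma Com_vis: "n \<ge> 1 \<Longrightarrow> Com i b \<in> range (srun n w) \<Longrightarrow> i < n \<and> b = (snd (w i) = 1)"
proof -
  assume n: "n \<ge> 1" and "Com i b \<in> range (srun n w)"
  then obtain T where T: "srun n w T = Com i b" by (metis rangeE)
  then obtain t where t: "T = Suc t" by (cases T) auto
  have I: "Inv n w (t div n) (t mod n)" using Inv_all n by simp
  have S: "S n w (t div n) (t mod n) = Com i b" using T t srun_S[OF n] by simp
  then have "t div n = 0" "i = t mod n" using I unfolding Inv_def by auto
  moreover have "t mod n < n" using n by simp
  ultimately show ?thesis using S S_Com[OF n, of "t mod n" w] by auto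
qed

lemma good_bits:
  assumes n: "n \<ge> 1" and g: "good n w"
  shows "\<exists>p q. 0 < p \<and> p < q \<and> (\<forall>i<n. bk n w p i = (snd (w i) = 1)) \<and> (\<forall>i<n. bk n w q i = (snd (w i) = 1)) \<and>
     (\<forall>k. p<k \<and> k<q \<longrightarrow> (\<exists>d<n. (\<forall>i<d. bk n w k i = (snd (w i) = 1)) \<and> \<not> bk n w k d \<and> snd (w d) = 1))"
proof -
  have vis: "S n w k i \<in> range (srun n w)" for k i unfolding S_def by (rule rangeI)
  from g have "witness n w" using Acc_witness[OF n] by (simp add: good_def)
  then obtain p q where pq: "p < q" "Pblk n w p" "Qblk n w q" "\<forall>k'. p<k' \<and> k'<q \<longrightarrow> Mblk n w k'"
    unfolding witness_def by blast
  have cv: "Com i b \<in> range (srun n w) \<Longrightarrow> b = (snd (w i) = 1)" for i b using Com_vis[OF n] by blast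
  have P: "\<forall>i<n. bk n w p i = (snd (w i) = 1)"
  proof (intro allI impI)
    fix i assume "i < n"
    then have "Ps i (bk n w p i) \<in> range (srun n w)" using pq(2) vis unfolding Pblk_def by metis
    then show "bk n w p i = (snd (w i) = 1)" using g \<open>i < n\<close> cv unfolding good_def by blast
  qed
  have Q: "\<forall>i<n. bk n w q i = (snd (w i) = 1)"
  proof (intro allI impI)
    fix i assume "i < n"
    then have "Qs i (bk n w q i) \<in> range (srun n w)" using pq(3) vis unfolding Qblk_def by metis
    then show "bk n w q i = (snd (w i) = 1)" using g \<open>i < n\<close> cv unfolding good_def by blast
  qed
  have M: "\<forall>k. p<k \<and> k<q \<longrightarrow> (\<exists>d<n. (\<forall>i<d. bk n w k i = (snd (w i) = 1)) \<and> \<not> bk n w k d \<and> snd (w d) = 1)"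
  proof (intro allI impI)
    fix k assume "p<k \<and> k<q"
    then obtain d where d: "d<n" "\<forall>i<d. S n w k i = Ma i (bk n w k i)" "S n w k d = Mm d" "\<not> bk n w k d"
      using pq(4) unfolding Mblk_def by blast
    have "\<forall>i<d. bk n w k i = (snd (w i) = 1)"
    proof (intro allI impI)
      fix i assume "i < d"
      then have "Ma i (bk n w k i) \<in> range (srun n w)" using d(2) vis by metis
      then show "bk n w k i = (snd (w i) = 1)" using g \<open>i < d\<close> d(1) cv unfolding good_def by auto
    qed
    moreover have "Mm d \<in> range (srun n w)" using d(3) vis by metis
    then have "snd (w d) = 1" using g d(1) cv unfolding good_def by blast
    ultimately show "\<exists>d<n. (\<forall>i<d. bk n w k i = (snd (w i) = 1)) \<and> \<not> bk n w k d \<and> snd (w d) = 1"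
      using d by blast
  qed
  have "p \<noteq> 0"
  proof
    assume "p = 0"
    then have "S n w 0 0 = Ps 0 (bk n w 0 0)" using pq(2) n unfolding Pblk_def by auto
    then show False using S_Com[OF n, of 0 w] n by simp
  qed
  then show ?thesis using P Q M pq(1) by blast
qed

definition b2n :: "bool \<Rightarrow> nat" where "b2n b = (if b then 1 else 0)"
definition cc :: "nat \<Rightarrow> bool list \<Rightarrow> nat" where "cc n Jl = (if enc n 0 = Jl then 1 else 0)"
definition bval :: "nat \<Rightarrow> bool list \<Rightarrow> nat \<Rightarrow> nat" where
  "bval n Jl k = (if k \<le> length (W (2^n)) then W (2^n) ! (k - 1) else cc n Jl)"
definition alpha :: "nat \<Rightarrow> bool list \<Rightarrow> nat \<Rightarrow> nat" where
  "alpha n Jl t = (if t div n = 0 then 0 else b2n (enc n (bval n Jl (t div n)) ! (t mod n)))"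
definition Sg :: "(nat \<Rightarrow> nat) \<Rightarrow> nat \<Rightarrow> nat" where "Sg g r = sum g {..<r}"
definition Jof :: "nat \<Rightarrow> nat list \<Rightarrow> bool list" where "Jof n x = map (\<lambda>i. x!i = 1) [0..<n]"
definition tI :: "nat \<Rightarrow> (nat \<Rightarrow> nat) \<Rightarrow> nat list \<Rightarrow> nat list" where
  "tI n g x = map (alpha n (Jof n x)) [Sg g (length x) ..< Sg g (Suc (length x))]"

lemma alpha_indep: "t < 2^(2^n) \<Longrightarrow> alpha n J t = alpha n J' t"
proof -
  assume t: "t < 2^(2^n)"
  have "t div n \<le> t" by simp
  then have "t div n \<le> length (W (2^n))" using t W_len[of "2^n"] by linarith
  then show ?thesis by (simp add: alpha_def bval_def)
qed

lemma Sg_mono: "i \<le> j \<Longrightarrow> Sg g i \<le> Sg g j"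
  unfolding Sg_def by (rule sum_mono2) auto

lemma Sg_ge: "delay_fun g \<Longrightarrow> r \<le> Sg g r"
proof -
  assume "delay_fun g"
  then have "(\<Sum>i<r. (1::nat)) \<le> sum g {..<r}" by (intro sum_mono) (simp add: delay_fun_def)
  then show ?thesis by (simp add: Sg_def)
qed

lemma Sg_Suc: "Sg g (Suc r) = Sg g r + g r"
  by (simp add: Sg_def)

lemma concat_u:
  assumes "\<And>i. u i = map a [Sg g i ..< Sg g (Suc i)]"
  shows "concat (map u [0..<k]) = map a [0..<Sg g k]"
proof (induction k)
  case 0 then show ?case by (simp add: Sg_def)
next
  case (Suc k)
  have "[0..<Sg g (Suc k)] = [0..<Sg g k] @ [Sg g k..<Sg g (Suc k)]"
    using upt_add_eq_append[of 0 "Sg g k" "g k"] by (simp add: Sg_Suc)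
  then show ?case using Suc assms by simp
qed

lemma in_word_u:
  assumes "delay_fun g" "\<And>i. u i = map a [Sg g i ..< Sg g (Suc i)]"
  shows "in_word u t = a t"
proof -
  have "concat (map u [0..<Suc t]) = map a [0..<Sg g (Suc t)]" using concat_u assms(2) by blast
  moreover have "t < Sg g (Suc t)" using Sg_ge[OF assms(1), of "Suc t"] by simp
  ultimately show ?thesis by (simp add: in_word_def)
qed

lemma enc_ne_cc: "n \<ge> 1 \<Longrightarrow> enc n (cc n Jl) \<noteq> Jl"
proof -
  assume n: "n \<ge> 1"
  have "(2::nat) \<le> 2^n" using n by (cases n) auto
  then have "enc n 0 \<noteq> enc n 1" using val_enc[of 0 n] val_enc[of 1 n] by force
  then show ?thesis by (auto simp: cc_def)
qed

lemma bk_alpha: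
  assumes n: "n \<ge> 1" and k: "k \<ge> 1" and i: "i < n" and w: "\<And>t. fst (w t) = alpha n Jl t"
  shows "bk n w k i = enc n (bval n Jl k) ! i"
proof -
  have "(n*k+i) div n = k" "(n*k+i) mod n = i" using n i by auto
  then show ?thesis using w k by (simp add: bk_def alpha_def b2n_def)
qed

lemma blk_eq:
  assumes "\<forall>i<n. bk n w k i = Jl ! i" "\<forall>i<n. bk n w k i = enc n x ! i" "length Jl = n"
  shows "enc n x = Jl"
  using assms by (intro nth_equalityI) auto

lemma I_win:
  assumes n: "n \<ge> 1" and g: "delay_fun g" and sg: "(\<Sum>i<n. g i) \<le> 2 ^ (2 ^ n)"
  shows "I_wins g (in_alph (Aut n)) (out_alph (Aut n)) (lang (Aut n))"
  unfolding I_wins_def Aut_simps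
proof (intro exI[of _ "tI n g"] conjI allI impI)
  fix x :: "nat list"
  show "length (tI n g x) = g (length x)" by (simp add: tI_def Sg_Suc)
  show "set (tI n g x) \<subseteq> {0,1}" by (auto simp: tI_def alpha_def b2n_def)
next
  fix u :: "nat \<Rightarrow> nat list" and v :: "nat \<Rightarrow> nat"
  assume v: "\<forall>i. v i \<in> {0,1,2}" and u: "\<forall>i. u i = tI n g (map v [0..<i])"
  define Jv where "Jv = map (\<lambda>i. v i = 1) [0..<n]"
  have uu: "u i = map (alpha n Jv) [Sg g i ..< Sg g (Suc i)]" for i
  proof (cases "n \<le> i")
    case True
    then have "Jof n (map v [0..<i]) = Jv" by (simp add: Jof_def Jv_def)
    then show ?thesis using u by (simp add: tI_def)
  next
    case False
    have "Sg g (Suc i) \<le> Sg g n" using False by (intro Sg_mono) simp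
    then have "\<forall>t\<in>set [Sg g i ..< Sg g (Suc i)]. alpha n (Jof n (map v [0..<i])) t = alpha n Jv t"
      using sg by (auto intro!: alpha_indep simp: Sg_def)
    then show ?thesis using u by (simp add: tI_def)
  qed
  define w where "w = play_word u v"
  have wt: "fst (w t) = alpha n Jv t" "snd (w t) = v t" for t
    using in_word_u[OF g uu] by (simp_all add: w_def play_word_def)
  show "play_word u v \<notin> lang (Aut n)"
  proof
    assume "play_word u v \<in> lang (Aut n)"
    then have "good n w" using lang_Aut w_def by blast
    then obtain p q where pq: "0 < p" "p < q" "\<forall>i<n. bk n w p i = (snd (w i) = 1)"
      "\<forall>i<n. bk n w q i = (snd (w i) = 1)"
      "\<forall>k. p<k \<and> k<q \<longrightarrow> (\<exists>d<n. (\<forall>i<d. bk n w k i = (snd (w i) = 1)) \<and> \<not> bk n w k d \<and> snd (w d) = 1)"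
      using good_bits[OF n] by blast
    have Jvn: "i < n \<Longrightarrow> Jv ! i = (snd (w i) = 1)" for i by (simp add: Jv_def wt)
    have lJ: "length Jv = n" by (simp add: Jv_def)
    have bb: "k \<ge> 1 \<Longrightarrow> i < n \<Longrightarrow> bk n w k i = enc n (bval n Jv k) ! i" for k i
      using bk_alpha[OF n _ _ wt(1)] by blast
    let ?L = "length (W (2^n))"
    have encp: "enc n (bval n Jv p) = Jv"
      using pq(1,3) bb Jvn lJ by (intro blk_eq[of n w p]) auto
    have encq: "enc n (bval n Jv q) = Jv"
      using pq(1,2,4) bb Jvn lJ by (intro blk_eq[of n w q]) auto
    have qL: "q \<le> ?L"
    proof (rule ccontr)
      assume "\<not> q \<le> ?L"
      then have "bval n Jv q = cc n Jv" by (simp add: bval_def)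
      then show False using encq enc_ne_cc[OF n] by simp
    qed
    have Wlt: "x \<in> set (W (2^n)) \<Longrightarrow> x < 2^n" for x using W_set by blast
    have bv: "1 \<le> k \<Longrightarrow> k \<le> ?L \<Longrightarrow> bval n Jv k = W (2^n) ! (k-1) \<and> W (2^n) ! (k-1) < 2^n" for k
      using Wlt by (simp add: bval_def)
    have p1: "1 \<le> p" "p \<le> ?L" "1 \<le> q" using pq qL by auto
    have vp: "W (2^n) ! (p-1) = val Jv" using bv[OF p1(1,2)] encp val_enc[of "W (2^n) ! (p-1)" n] by simp
    have vq: "W (2^n) ! (q-1) = val Jv" using bv[OF p1(3) qL] encq val_enc[of "W (2^n) ! (q-1)" n] by simp
    have vm: "W (2^n) ! (k-1) < val Jv" if pk: "p < k" "k < q" for k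
    proof -
      obtain d where d: "d<n" "\<forall>i<d. bk n w k i = (snd (w i) = 1)" "\<not> bk n w k d" "snd (w d) = 1"
        using pq(5) pk by blast
      have k1: "1 \<le> k" "k \<le> ?L" using pk pq qL by auto
      have "lexw (enc n (bval n Jv k)) Jv d"
        unfolding lexw_def
      proof (intro conjI)
        show "d < length (enc n (bval n Jv k))" using d by simp
        show "take d (enc n (bval n Jv k)) = take d Jv"
          using d bb[OF k1(1)] Jvn lJ by (intro nth_equalityI) auto
        show "\<not> enc n (bval n Jv k) ! d" using d bb[OF k1(1)] by simp
        show "Jv ! d" using d Jvn by simp
      qed
      then have "val (enc n (bval n Jv k)) < val Jv" using lex_val lJ by simp
      then show ?thesis using bv[OF k1] val_enc by simp
    qed
    have b1: "p - 1 < q - 1" using pq by simp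
    have b2: "q - 1 < ?L" using pq qL by simp
    have b3: "W (2^n) ! (p-1) = W (2^n) ! (q-1)" using vp vq by simp
    have b4: "\<forall>k. p - 1 < k \<and> k < q - 1 \<longrightarrow> W (2^n) ! k < W (2^n) ! (p-1)"
    proof (intro allI impI)
      fix k assume k: "p - 1 < k \<and> k < q - 1"
      then have "p < Suc k" "Suc k < q" using pq by auto
      then show "W (2^n) ! k < W (2^n) ! (p-1)" using vm[of "Suc k"] vp by simp
    qed
    have "bad (W (2^n))" unfolding bad_def
      by (rule exI[of _ "p-1"], rule exI[of _ "q-1"]) (intro conjI b1 b2 b3 b4)
    then show False using W_free by blast
  qed
qed

definition betag :: "nat \<Rightarrow> nat \<Rightarrow> nat \<Rightarrow> bool list \<Rightarrow> (nat \<Rightarrow> nat) \<Rightarrow> nat \<Rightarrow> nat" where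
  "betag n P Q Jl dd i = (if i < n then b2n (Jl ! i) else
     if i div n = P \<and> i mod n = 0 then 1 else
     if P < i div n \<and> i div n < Q \<and> i mod n = dd (i div n) then 1 else
     if i div n = Q \<and> i mod n = 0 then 2 else 0)"

definition Eo :: "(nat \<Rightarrow> nat) \<Rightarrow> nat \<Rightarrow> nat \<Rightarrow> nat \<Rightarrow> bool list \<Rightarrow> (nat \<Rightarrow> nat) \<Rightarrow> nat \<Rightarrow> nat \<Rightarrow> st" where
  "Eo \<alpha> n P Q Jl dd k r = (if k = 0 then Com r (Jl ! r) else if k < P then Bs r
     else if k = P then Ps r (\<alpha> (n*k+r) = 1)
     else if k < Q then (if r < dd k then Ma r (\<alpha> (n*k+r) = 1) else if r = dd k then Mm r else Mb r)
     else if k = Q then Qs r (\<alpha> (n*k+r) = 1) else Acc)"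

lemma divmod_kr: "r < n \<Longrightarrow> (n*k + r) div n = k \<and> (n*k + r) mod n = (r::nat)"
  by auto

lemma betag_kr: "r < n \<Longrightarrow> betag n P Q Jl dd (n*k+r) = (if k = 0 then b2n (Jl ! r) else
     if k = P \<and> r = 0 then 1 else
     if P < k \<and> k < Q \<and> r = dd k then 1 else
     if k = Q \<and> r = 0 then 2 else 0)"
proof -
  assume r: "r < n"
  have "n*k + r < n \<longleftrightarrow> k = 0" using r by (cases k) auto
  then show ?thesis using divmod_kr[OF r, of k] r by (auto simp: betag_def)
qed

context
  fixes \<alpha> :: "nat \<Rightarrow> nat" and n P Q :: nat and Jl :: "bool list" and dd :: "nat \<Rightarrow> nat"
  assumes n: "n \<ge> 1" and PQ: "1 \<le> P" "P < Q" and lJ: "length Jl = n"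
    and Pb: "\<forall>r<n. (\<alpha> (n*P+r) = 1) = Jl ! r" and Qb: "\<forall>r<n. (\<alpha> (n*Q+r) = 1) = Jl ! r"
    and Mb: "\<forall>k. P < k \<and> k < Q \<longrightarrow> dd k < n \<and> (\<forall>r<dd k. (\<alpha> (n*k+r) = 1) = Jl ! r) \<and> \<alpha> (n*k + dd k) \<noteq> 1 \<and> Jl ! (dd k)"
begin

abbreviation "wo \<equiv> (\<lambda>t. (\<alpha> t, betag n P Q Jl dd t))"
abbreviation "E \<equiv> Eo \<alpha> n P Q Jl dd"

lemma run_same: "Suc r < n \<Longrightarrow> S n wo k r = E k r \<Longrightarrow> S n wo k (Suc r) = E k (Suc r)"
proof -
  assume r: "Suc r < n" and IH: "S n wo k r = E k r"
  have St: "S n wo k (Suc r) = step n (E k r) (\<alpha> (n*k + Suc r), betag n P Q Jl dd (n*k + Suc r))"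
    using S_Suc[of n wo k r] IH by simp
  have bt: "betag n P Q Jl dd (n*k + Suc r) = (if k = 0 then b2n (Jl ! Suc r) else
     if P < k \<and> k < Q \<and> Suc r = dd k then 1 else 0)"
    using betag_kr[OF r, of P Q Jl dd k] by auto
  consider "k = 0" | "0 < k \<and> k < P" | "k = P" | "P < k \<and> k < Q" | "k = Q" | "k > Q" by linarith
  then show ?thesis
  proof cases
    case 4
    then have d: "dd k < n" "\<alpha> (n*k + dd k) \<noteq> 1" using Mb by auto
    have d2: "Suc r = dd k \<Longrightarrow> \<alpha> (Suc (n*k+r)) \<noteq> 1"
    proof -
      assume "Suc r = dd k"
      then have "Suc (n*k+r) = n*k + dd k" by simp
      then have "\<alpha> (Suc (n*k+r)) = \<alpha> (n*k + dd k)" by (rule arg_cong)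
      then show "\<alpha> (Suc (n*k+r)) \<noteq> 1" using d(2) by simp
    qed
    show ?thesis using St bt 4 r d d2 PQ by (auto simp: Eo_def)
  qed (use St bt r PQ in \<open>auto simp: Eo_def b2n_def\<close>)
qed

lemma run_new: "S n wo k (n-1) = E k (n-1) \<Longrightarrow> S n wo (Suc k) 0 = E (Suc k) 0"
proof -
  assume IH: "S n wo k (n-1) = E k (n-1)"
  have St: "S n wo (Suc k) 0 = step n (E k (n-1)) (\<alpha> (n*Suc k + 0), betag n P Q Jl dd (n*Suc k + 0))"
    using S_new[OF n, of wo k] IH by simp
  have n0: "0 < n" using n by simp
  have bt: "betag n P Q Jl dd (n*Suc k + 0) = (if Suc k = P then 1 else
     if P < Suc k \<and> Suc k < Q \<and> 0 = dd (Suc k) then 1 else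
     if Suc k = Q then 2 else 0)"
    using betag_kr[OF n0, of P Q Jl dd "Suc k"] by auto
  have nn: "\<not> Suc (n-1) < n" using n by simp
  consider "k = 0" | "0 < k \<and> k < P" | "k = P" | "P < k \<and> k < Q" | "k = Q" | "k > Q" by linarith
  then show ?thesis
  proof cases
    case 1
    then show ?thesis using St bt nn PQ by (auto simp: Eo_def newB_def)
  next
    case 2
    then show ?thesis using St bt nn PQ by (auto simp: Eo_def newB_def)
  next
    case 3
    have d: "P < Suc k \<and> Suc k < Q \<Longrightarrow> dd (Suc k) = 0 \<Longrightarrow> \<alpha> (n * Suc k + 0) \<noteq> 1"
      using Mb by (metis)
    show ?thesis using St bt nn PQ 3 d by (auto simp: Eo_def newM_def)
  next
    case 4
    have dk: "dd k < n" using Mb 4 by auto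
    have d: "P < Suc k \<and> Suc k < Q \<Longrightarrow> dd (Suc k) = 0 \<Longrightarrow> \<alpha> (n * Suc k + 0) \<noteq> 1"
      using Mb by (metis)
    have e: "E k (n-1) = (if n - 1 = dd k then Mm (n-1) else Mb (n-1))" using 4 dk by (auto simp: Eo_def)
    show ?thesis using St bt nn PQ 4 d e by (auto simp: Eo_def newM_def)
  next
    case 5
    then show ?thesis using St nn PQ by (auto simp: Eo_def)
  next
    case 6
    then show ?thesis using St PQ by (auto simp: Eo_def)
  qed
qed

lemma run_E: "r < n \<Longrightarrow> S n wo k r = E k r"
proof (rule kr_induct[where P="\<lambda>k r. S n wo k r = E k r"])
  show "n \<ge> 1" by (rule n)
  show "S n wo 0 0 = E 0 0" using PQ n by (simp add: S_def Eo_def betag_def b2n_def)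
qed (auto intro: run_same run_new)

lemma vis_E: "s \<in> range (srun n wo) \<Longrightarrow> s = Init \<or> (\<exists>k r. r < n \<and> s = E k r)"
proof -
  assume "s \<in> range (srun n wo)"
  then obtain T where T: "srun n wo T = s" by (metis rangeE)
  show ?thesis
  proof (cases T)
    case 0 then show ?thesis using T by simp
  next
    case (Suc t)
    have "t mod n < n" using n by simp
    moreover have "s = S n wo (t div n) (t mod n)" using T Suc n by (simp add: S_def)
    ultimately show ?thesis using run_E by blast
  qed
qed

lemma E_vis: "r < n \<Longrightarrow> E k r \<in> range (srun n wo)"
proof -
  assume "r < n"
  then have "E k r = srun n wo (Suc (n*k+r))" using run_E by (simp add: S_def del: srun.simps)
  then show ?thesis by (metis rangeI)
qed

lemma good_wo: "good n wo"
  unfolding good_def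
proof (intro conjI allI impI)
  have "E (Suc Q) 0 = Acc" using PQ by (simp add: Eo_def)
  then show "Acc \<in> range (srun n wo)" using E_vis[of 0 "Suc Q"] n by simp
next
  fix i b assume i: "i < n"
  show "Ps i b \<in> range (srun n wo) \<Longrightarrow> Com i b \<in> range (srun n wo)"
  proof -
    assume "Ps i b \<in> range (srun n wo)"
    then obtain k r where kr: "r < n" "Ps i b = E k r" using vis_E by blast
    then have "k = P" "i = r" "b = (\<alpha> (n*P+r) = 1)" using PQ by (auto simp: Eo_def split: if_splits)
    then have "Com i b = E 0 i" using Pb kr by (simp add: Eo_def)
    then show ?thesis using E_vis i by simp
  qed
  show "Qs i b \<in> range (srun n wo) \<Longrightarrow> Com i b \<in> range (srun n wo)"
  proof -
    assume "Qs i b \<in> range (srun n wo)"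
    then obtain k r where kr: "r < n" "Qs i b = E k r" using vis_E by blast
    then have "k = Q" "i = r" "b = (\<alpha> (n*Q+r) = 1)" using PQ by (auto simp: Eo_def split: if_splits)
    then have "Com i b = E 0 i" using Qb kr by (simp add: Eo_def)
    then show ?thesis using E_vis i by simp
  qed
  show "Ma i b \<in> range (srun n wo) \<Longrightarrow> Com i b \<in> range (srun n wo)"
  proof -
    assume "Ma i b \<in> range (srun n wo)"
    then obtain k r where kr: "r < n" "Ma i b = E k r" using vis_E by blast
    then have "P < k" "k < Q" "i = r" "r < dd k" "b = (\<alpha> (n*k+r) = 1)" using PQ by (auto simp: Eo_def split: if_splits)
    then have "Com i b = E 0 i" using Mb by (simp add: Eo_def)
    then show ?thesis using E_vis i by simp
  qed
  show "Mm i \<in> range (srun n wo) \<Longrightarrow> Com i True \<in> range (srun n wo)"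
  proof -
    assume "Mm i \<in> range (srun n wo)"
    then obtain k r where kr: "r < n" "Mm i = E k r" using vis_E by blast
    then have "P < k" "k < Q" "i = r" "r = dd k" using PQ by (auto simp: Eo_def split: if_splits)
    then have "Com i True = E 0 i" using Mb by (simp add: Eo_def)
    then show ?thesis using E_vis i by simp
  qed
qed

end

definition KK :: "nat \<Rightarrow> nat" where "KK n = n * (2^(2^n) + 1)"
definition bsp :: "nat \<Rightarrow> nat list \<Rightarrow> nat \<Rightarrow> bool list" where
  "bsp n pre k = map (\<lambda>r. pre ! (n*k+r) = 1) [0..<n]"
definition xsp :: "nat \<Rightarrow> nat list \<Rightarrow> nat list" where
  "xsp n pre = map (\<lambda>k. val (bsp n pre (Suc k))) [0..<2^(2^n)]"
definition isbad :: "nat list \<Rightarrow> nat \<times> nat \<Rightarrow> bool" where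
  "isbad xs pq \<longleftrightarrow> fst pq < snd pq \<and> snd pq < length xs \<and> xs ! fst pq = xs ! snd pq \<and>
     (\<forall>k. fst pq < k \<and> k < snd pq \<longrightarrow> xs ! k < xs ! fst pq)"
definition PQp where "PQp n pre = (SOME pq. isbad (xsp n pre) pq)"
definition Pp where "Pp n pre = Suc (fst (PQp n pre))"
definition Qp where "Qp n pre = Suc (snd (PQp n pre))"
definition Jp where "Jp n pre = bsp n pre (Pp n pre)"
definition ddp where "ddp n pre k = (SOME d. lexw (bsp n pre k) (Jp n pre) d)"
definition tO :: "nat \<Rightarrow> nat list \<Rightarrow> nat" where
  "tO n x = (let pre = take (KK n) x in betag n (Pp n pre) (Qp n pre) (Jp n pre) (ddp n pre) (length x - KK n))"

lemma bsp_len[simp]: "length (bsp n pre k) = n" by (simp add: bsp_def)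

lemma isbad_PQ: "isbad (xsp n pre) (PQp n pre)"
proof -
  have "set (xsp n pre) \<subseteq> {..<2^n}"
  proof
    fix x assume "x \<in> set (xsp n pre)"
    then obtain k where "x = val (bsp n pre (Suc k))" by (auto simp: xsp_def)
    then show "x \<in> {..<2^n}" using val_lt[of "bsp n pre (Suc k)"] by simp
  qed
  moreover have "2^(2^n) \<le> length (xsp n pre)" by (simp add: xsp_def)
  ultimately have "bad (xsp n pre)" by (rule exists_bad)
  then obtain p q where "p < q \<and> q < length (xsp n pre) \<and> xsp n pre ! p = xsp n pre ! q \<and>
     (\<forall>k. p<k \<and> k<q \<longrightarrow> xsp n pre ! k < xsp n pre ! p)" unfolding bad_def by blast
  then have "isbad (xsp n pre) (p,q)" unfolding isbad_def fst_conv snd_conv by blast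
  then have "\<exists>pq. isbad (xsp n pre) pq" by blast
  then show ?thesis unfolding PQp_def by (rule someI_ex)
qed

lemma props:
  assumes n: "n \<ge> 1" and al: "\<forall>t < KK n. \<alpha> t = pre ! t"
  shows "1 \<le> Pp n pre" "Pp n pre < Qp n pre" "length (Jp n pre) = n"
    "\<forall>r<n. (\<alpha> (n * Pp n pre + r) = 1) = Jp n pre ! r"
    "\<forall>r<n. (\<alpha> (n * Qp n pre + r) = 1) = Jp n pre ! r"
    "\<forall>k. Pp n pre < k \<and> k < Qp n pre \<longrightarrow> ddp n pre k < n \<and>
        (\<forall>r<ddp n pre k. (\<alpha> (n*k+r) = 1) = Jp n pre ! r) \<and> \<alpha> (n*k + ddp n pre k) \<noteq> 1 \<and> Jp n pre ! (ddp n pre k)"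
proof -
  obtain p q where pq: "PQp n pre = (p, q)" by fastforce
  have ib: "isbad (xsp n pre) (p,q)" using isbad_PQ[of n pre] pq by simp
  have P: "Pp n pre = Suc p" and Q: "Qp n pre = Suc q" using pq by (simp_all add: Pp_def Qp_def)
  have lx: "length (xsp n pre) = 2^(2^n)" by (simp add: xsp_def)
  have xs: "k < 2^(2^n) \<Longrightarrow> xsp n pre ! k = val (bsp n pre (Suc k))" for k by (simp add: xsp_def)
  have qb: "q < 2^(2^n)" using ib lx by (simp add: isbad_def)
  have pos: "k \<le> 2^(2^n) \<Longrightarrow> r < n \<Longrightarrow> \<alpha> (n*k+r) = pre ! (n*k+r)" for k r
  proof -
    assume a: "k \<le> 2^(2^n)" "r < n"
    have "n*k \<le> n * 2^(2^n)" using a(1) by (rule mult_le_mono2)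
    then have "n*k + r < n * 2^(2^n) + n" using a(2) by linarith
    then show ?thesis using al by (simp add: KK_def algebra_simps)
  qed
  have bb: "k \<le> 2^(2^n) \<Longrightarrow> r < n \<Longrightarrow> (\<alpha> (n*k+r) = 1) = bsp n pre k ! r" for k r
    using pos by (simp add: bsp_def)
  show "1 \<le> Pp n pre" using P by simp
  show "Pp n pre < Qp n pre" using P Q ib by (simp add: isbad_def)
  show "length (Jp n pre) = n" by (simp add: Jp_def)
  have Pl: "Suc p \<le> 2^(2^n)" "Suc q \<le> 2^(2^n)" using ib qb by (auto simp: isbad_def)
  show "\<forall>r<n. (\<alpha> (n * Pp n pre + r) = 1) = Jp n pre ! r" using bb[OF Pl(1)] P by (simp add: Jp_def)
  have "xsp n pre ! p = xsp n pre ! q" using ib by (simp add: isbad_def)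
  moreover have "p < 2^(2^n)" using ib qb by (simp add: isbad_def)
  ultimately have "val (bsp n pre (Suc p)) = val (bsp n pre (Suc q))" using xs[of p] xs[of q] qb by simp
  then have eq: "bsp n pre (Suc p) = bsp n pre (Suc q)" using val_inj by simp
  show "\<forall>r<n. (\<alpha> (n * Qp n pre + r) = 1) = Jp n pre ! r" using bb[OF Pl(2)] P Q eq by (simp add: Jp_def)
  show "\<forall>k. Pp n pre < k \<and> k < Qp n pre \<longrightarrow> ddp n pre k < n \<and>
        (\<forall>r<ddp n pre k. (\<alpha> (n*k+r) = 1) = Jp n pre ! r) \<and> \<alpha> (n*k + ddp n pre k) \<noteq> 1 \<and> Jp n pre ! (ddp n pre k)"
  proof (intro allI impI)
    fix k assume k: "Pp n pre < k \<and> k < Qp n pre"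
    then obtain k' where k': "k = Suc k'" "p < k'" "k' < q" using P Q by (cases k) auto
    have "xsp n pre ! k' < xsp n pre ! p" using ib k'(2,3) unfolding isbad_def fst_conv snd_conv by blast
    then have "val (bsp n pre k) < val (Jp n pre)" using xs k' qb P by (simp add: Jp_def)
    then have "\<exists>d. lexw (bsp n pre k) (Jp n pre) d" using val_lex by (simp add: Jp_def)
    then have lw: "lexw (bsp n pre k) (Jp n pre) (ddp n pre k)" unfolding ddp_def by (rule someI_ex)
    let ?d = "ddp n pre k"
    have kl: "k \<le> 2^(2^n)" using k' qb by simp
    have d: "?d < n" using lw by (simp add: lexw_def)
    have "\<forall>r<?d. (\<alpha> (n*k+r) = 1) = Jp n pre ! r"
    proof (intro allI impI)
      fix r assume r: "r < ?d"
      have "take ?d (bsp n pre k) ! r = take ?d (Jp n pre) ! r" using lw by (simp add: lexw_def)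
      then have "bsp n pre k ! r = Jp n pre ! r" using r by simp
      then show "(\<alpha> (n*k+r) = 1) = Jp n pre ! r" using bb[OF kl] r d by simp
    qed
    moreover have "\<alpha> (n*k + ?d) \<noteq> 1" using lw bb[OF kl d] by (simp add: lexw_def)
    moreover have "Jp n pre ! ?d" using lw by (simp add: lexw_def)
    ultimately show "?d < n \<and> (\<forall>r<?d. (\<alpha> (n*k+r) = 1) = Jp n pre ! r) \<and> \<alpha> (n*k + ?d) \<noteq> 1 \<and> Jp n pre ! ?d"
      using d by blast
  qed
qed

lemma len_concat:
  assumes "\<forall>i. length (u i) = (if i = 0 then K else 1)"
  shows "length (concat (map u [0..<Suc i])) = K + i"
  using assms by (induction i) auto

lemma concat_pre: "concat (map u [0..<Suc i]) = u 0 @ concat (map u [1..<Suc i])"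
  by (simp add: upt_conv_Cons del: upt_Suc)

lemma O_win:
  assumes n: "n \<ge> 1"
  shows "O_wins (\<lambda>i. if i = 0 then KK n else 1) (in_alph (Aut n)) (out_alph (Aut n)) (lang (Aut n))"
  unfolding O_wins_def Aut_simps
proof (intro exI[of _ "tO n"] conjI allI impI)
  show tOr: "tO n x \<in> {0,1,2}" for x by (simp add: tO_def Let_def betag_def b2n_def)
  fix u v
  assume u: "\<forall>i. length (u i) = (if i = 0 then KK n else 1) \<and> set (u i) \<subseteq> {0, 1}"
    and v: "\<forall>i. v i = tO n (concat (map u [0..<Suc i]))"
  define pre where "pre = u 0"
  have lu: "\<forall>i. length (u i) = (if i = 0 then KK n else 1)" using u by blast
  have lpre: "length pre = KK n" using u by (simp add: pre_def)
  have Kpos: "KK n > 0" using n by (simp add: KK_def)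
  have vi: "v i = betag n (Pp n pre) (Qp n pre) (Jp n pre) (ddp n pre) i" for i
  proof -
    have "take (KK n) (concat (map u [0..<Suc i])) = pre" using lpre concat_pre[of u i]
      by (simp add: pre_def)
    moreover have "length (concat (map u [0..<Suc i])) - KK n = i" using len_concat[OF lu] by simp
    ultimately show ?thesis using v by (simp add: tO_def Let_def)
  qed
  have al: "\<forall>t < KK n. in_word u t = pre ! t"
    using lpre concat_pre[of u] by (simp add: in_word_def pre_def nth_append)
  have alr: "in_word u t \<in> {0,1}" for t
  proof -
    have "t < length (concat (map u [0..<Suc t]))" using len_concat[OF lu] Kpos by simp
    then have "in_word u t \<in> set (concat (map u [0..<Suc t]))" unfolding in_word_def by (rule nth_mem)
    then show ?thesis using u by auto
  qed
  note pr = props[OF n al]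
  have "good n (\<lambda>t. (in_word u t, betag n (Pp n pre) (Qp n pre) (Jp n pre) (ddp n pre) t))"
    by (rule good_wo[OF n pr])
  moreover have "play_word u v = (\<lambda>t. (in_word u t, betag n (Pp n pre) (Qp n pre) (Jp n pre) (ddp n pre) t))"
    using vi by (simp add: play_word_def fun_eq_iff)
  moreover have "\<forall>t. play_word u v t \<in> {0,1} \<times> {0,1,2}"
  proof
    fix t
    have vt: "v t \<in> {0,1,2}" using v tOr by metis
    show "play_word u v t \<in> {0,1} \<times> {0,1,2}" unfolding play_word_def using alr[of t] vt by blast
  qed
  ultimately show "play_word u v \<in> lang (Aut n)" using lang_Aut by simp
qed

theorem theorem3:
  shows "\<exists>c::nat. \<forall>n::nat. n \<ge> 1 \<longrightarrow>
    (\<exists>A. wf_dwm A \<and> aut_size A \<le> c * n \<and>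
       (\<exists>f. const_delay f \<and> O_wins f (in_alph A) (out_alph A) (lang A)) \<and>
       (\<forall>g. delay_fun g \<and> (\<Sum>i<n. g i) \<le> 2 ^ (2 ^ n) \<longrightarrow>
            I_wins g (in_alph A) (out_alph A) (lang A)))"
proof (intro exI[of _ 52] allI impI)
  fix n :: nat assume n: "n \<ge> 1"
  have cd: "const_delay (\<lambda>i. if i = 0 then KK n else 1)"
    using n by (simp add: const_delay_def delay_fun_def KK_def)
  show "\<exists>A. wf_dwm A \<and> aut_size A \<le> 52 * n \<and>
       (\<exists>f. const_delay f \<and> O_wins f (in_alph A) (out_alph A) (lang A)) \<and>
       (\<forall>g. delay_fun g \<and> (\<Sum>i<n. g i) \<le> 2 ^ (2 ^ n) \<longrightarrow>
            I_wins g (in_alph A) (out_alph A) (lang A))"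
    using wf_Aut[OF n] size_Aut[OF n] cd O_win[OF n] I_win[OF n]
    by (intro exI[of _ "Aut n"]) blast
qed

end
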